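(* Let $\epsilon>0$, let $(\epsilon_k)_{k\in\mathbb N}$ be positive numbers with $\sum_{k=1}^\infty\epsilon_k<\epsilon$, let $(j_k)_{k\in\mathbb N}$ be a strictly increasing sequence of even natural numbers, and let $(x_k)_{k\in\mathbb N}$ be a block sequence in $\mathfrak X_0$ such that (i) $\|x_k\|_{W_0}=1$ for all $k$; (ii) $\frac{|\operatorname{supp}x_k|}{m_{j_k}}<\epsilon_k$ for all $k$; (iii) $\|x_{k+1}\|_{G_0}\le\frac{\epsilon_k}{n_{j_k}}$ for all $k$. Then $(x_k)_{k\in\mathbb N}$ is $(1+\epsilon)$-equivalent to the unit vector basis of $c_0$, i.e. $\max_i|a_i|\le\|\sum_{i=1}^n a_ix_i\|_{W_0}\le(1+\epsilon)\max_i|a_i|$ for all $n$ and all real $a_1,\dots,a_n$.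
   Context: All spaces are real. Let $c_{00}(\mathbb N)$ be the space of finitely supported real sequences, $(e_n)$ its unit vector basis and $e_n^*$ the coordinate functionals (elements of $c_{00}(\mathbb N)$ act on each other via the usual inner product). For $x\in c_{00}(\mathbb N)$, $\operatorname{supp}x=\{n:x(n)\ne0\}$ and $\operatorname{ran}x$ is the smallest interval of $\mathbb N$ containing $\operatorname{supp}x$; for nonzero $x,y$ write $x<y$ if $\max\operatorname{ran}x<\min\operatorname{ran}y$. For an interval $E\subset\mathbb N$, $Ef=f\cdot\chi_E$. A block sequence is a sequence $x_1<x_2<\cdots$ of nonzero finitely supported vectors. Put $m_1=2^8$, $m_{j+1}=m_j^5$, $n_1=2^7$, $n_{j+1}=(2n_j)^{s_{j+1}}$ with $s_{j+1}=\log_2(m_{j+1}^4)$. $G_0$ is the smallest subset of $c_{00}(\mathbb N)$ such that: (1) it contains all $e_n^*$; (2) it is symmetric; (3) for every $j\in\mathbb N$, every $d\le n_{2j}$ and every $f_1<\dots<f_d$ in $G_0$, it contains $\frac1{m_{2j}}\sum_{i=1}^d f_i$; (4) it contains $\sum_{i=1}^d a_if_i$ whenever $d\in\mathbb N$, $a_i\in\mathbb Q$, $\sum a_i^2\le1$, and $f_i\in G_0$ have pairwise different weights. An $f\in G_0$ has weight $w(f)=m_{2j}$ (and is called a functional with weight) if $f=\frac1{m_{2j}}\sum_{i=1}^d f_i$ for some $d\le n_{2j}$ and $f_1<\dots<f_d$ in $G_0$. Fix disjoint infinite sets $\Omega_1,\Omega_2\subset\mathbb N$, let $Q_s$ be the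 (countable) set of finite sequences $(f_1,\dots,f_d)$ of nonzero elements of $G_0$ with $f_1<\dots<f_d$, and fix an injection $\sigma:Q_s\to\{2j:j\in\Omega_2\}$ with $m_{\sigma(f_1,\dots,f_d)}>\max\{1/|f_i(e_l)|:i\le d,\ l\in\operatorname{supp}f_i\}\cdot\max\operatorname{supp}f_d$. A $\sigma$-$n_{2j+1}$ special sequence is an element $(f_1,\dots,f_{n_{2j+1}})$ of $Q_s$ such that each $f_i$ is a functional with weight, $w(f_1)=m_{2j_1}$ with $j_1\in\Omega_1$ and $n_{2j+1}^2<m_{2j_1}$, and $w(f_{i+1})=m_{\sigma(f_1,\dots,f_i)}$ for $1\le i<n_{2j+1}$. $W_0=G_0\cup\{\varepsilon E(\frac1{m_{2j+1}}\sum_{i=1}^{n_{2j+1}}f_i):|\varepsilon|=1,\ E\text{ a finite interval of }\mathbb N,\ (f_i)\text{ a }\sigma\text{-}n_{2j+1}\text{ special sequence}\}$. For $x\in c_{00}(\mathbb N)$ let $\|x\|_{G_0}=\sup_{f\in G_0}|f(x)|$ and $\|x\|_{W_0}=\sup_{f\in W_0}|f(x)|$; $\mathfrak{X}_{G_0}$ and $\mathfrak{X}_0$ are the completions of $c_{00}(\mathbb N)$ under these norms. *)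

theory Defs
  imports Complex_Main
begin

section \<open>Parameters m_j, n_j, s_j (indices j \<ge> 1; value at 0 is a dummy)\<close>

fun mm :: "nat \<Rightarrow> nat" where
  "mm 0 = 1"
| "mm (Suc 0) = 2^8"
| "mm (Suc (Suc j)) = (mm (Suc j))^5"

definition s_exp :: "nat \<Rightarrow> nat" where
  "s_exp j = nat \<lfloor>log 2 (real (mm j ^ 4))\<rfloor>"

fun nn :: "nat \<Rightarrow> nat" where
  "nn 0 = 1"
| "nn (Suc 0) = 2^7"
| "nn (Suc (Suc j)) = (2 * nn (Suc j)) ^ (s_exp (Suc (Suc j)))"

definition supp :: "(nat \<Rightarrow> real) \<Rightarrow> nat set" where
  "supp f = {l. f l \<noteq> 0}"

definition blk :: "(nat \<Rightarrow> real) \<Rightarrow> (nat \<Rightarrow> real) \<Rightarrow> bool" where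
  "blk x y \<longleftrightarrow> x \<noteq> (\<lambda>_. 0) \<and> y \<noteq> (\<lambda>_. 0) \<and> (\<forall>a\<in>supp x. \<forall>b\<in>supp y. a < b)"

definition block_list :: "(nat \<Rightarrow> real) list \<Rightarrow> bool" where
  "block_list fs \<longleftrightarrow> (\<forall>f\<in>set fs. f \<noteq> (\<lambda>_. 0)) \<and> sorted_wrt blk fs"

definition wavg :: "nat \<Rightarrow> (nat \<Rightarrow> real) list \<Rightarrow> nat \<Rightarrow> real" where
  "wavg j gs = (\<lambda>l. (\<Sum>g\<leftarrow>gs. g l) / real (mm (2*j)))"

inductive_set G0 :: "(nat \<Rightarrow> real) set" where
  unit: "(\<lambda>l. if l = n then 1 else 0) \<in> G0"
| neg: "f \<in> G0 \<Longrightarrow> (\<lambda>l. - f l) \<in> G0"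
| avg: "\<lbrakk>1 \<le> j; 1 \<le> length gs; length gs \<le> nn (2*j); block_list gs;
         \<forall>g\<in>set gs. g \<in> G0\<rbrakk> \<Longrightarrow> wavg j gs \<in> G0"
| comb: "\<lbrakk>length as = length fs; 1 \<le> length fs; \<forall>a\<in>set as. a \<in> \<rat>;
          (\<Sum>a\<leftarrow>as. a^2) \<le> 1; length js = length fs;
          distinct (map (\<lambda>j. mm (2*j)) js);
          \<forall>i<length fs. 1 \<le> js!i \<and> (\<exists>gs. 1 \<le> length gs \<and> length gs \<le> nn (2*(js!i))
             \<and> block_list gs \<and> (\<forall>g\<in>set gs. g \<in> G0) \<and> fs!i = wavg (js!i) gs)\<rbrakk>
         \<Longrightarrow> (\<lambda>l. \<Sum>i<length fs. as!i * (fs!i) l) \<in> G0"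

definition has_weight :: "(nat \<Rightarrow> real) \<Rightarrow> nat \<Rightarrow> bool" where
  "has_weight f w \<longleftrightarrow> (\<exists>j\<ge>1. w = mm (2*j) \<and> (\<exists>gs. 1 \<le> length gs \<and> length gs \<le> nn (2*j)
       \<and> block_list gs \<and> (\<forall>g\<in>set gs. g \<in> G0) \<and> f = wavg j gs))"

definition Qs :: "(nat \<Rightarrow> real) list set" where
  "Qs = {fs. 1 \<le> length fs \<and> (\<forall>f\<in>set fs. f \<in> G0 \<and> f \<noteq> (\<lambda>_. 0)) \<and> block_list fs}"

definition sigma_ok :: "nat set \<Rightarrow> ((nat \<Rightarrow> real) list \<Rightarrow> nat) \<Rightarrow> bool" where
  "sigma_ok \<Omega>2 \<sigma> \<longleftrightarrow> inj_on \<sigma> Qs \<and>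
     (\<forall>fs\<in>Qs. \<sigma> fs \<in> {2*j | j. j \<in> \<Omega>2} \<and>
        real (mm (\<sigma> fs)) > Max {1 / \<bar>f l\<bar> | f l. f \<in> set fs \<and> l \<in> supp f}
                              * real (Max (supp (last fs))))"

definition special :: "nat set \<Rightarrow> ((nat \<Rightarrow> real) list \<Rightarrow> nat) \<Rightarrow> nat \<Rightarrow> (nat \<Rightarrow> real) list \<Rightarrow> bool" where
  "special \<Omega>1 \<sigma> j fs \<longleftrightarrow> fs \<in> Qs \<and> length fs = nn (2*j+1) \<and>
     (\<forall>f\<in>set fs. \<exists>w. has_weight f w) \<and>
     (\<exists>j1\<in>\<Omega>1. has_weight (fs!0) (mm (2*j1)) \<and> (nn (2*j+1))^2 < mm (2*j1)) \<and>
     (\<forall>i. 1 \<le> i \<and> i < length fs \<longrightarrow> has_weight (fs!i) (mm (\<sigma> (take i fs))))"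

definition W0 :: "nat set \<Rightarrow> ((nat \<Rightarrow> real) list \<Rightarrow> nat) \<Rightarrow> (nat \<Rightarrow> real) set" where
  "W0 \<Omega>1 \<sigma> = G0 \<union>
     {(\<lambda>l. \<epsilon> * (if l \<in> {a..b} then (\<Sum>f\<leftarrow>fs. f l) / real (mm (2*j+1)) else 0))
       | \<epsilon> a b j fs. \<bar>\<epsilon>\<bar> = 1 \<and> 1 \<le> j \<and> special \<Omega>1 \<sigma> j fs}"

definition ip :: "(nat \<Rightarrow> real) \<Rightarrow> (nat \<Rightarrow> real) \<Rightarrow> real" where
  "ip f x = (\<Sum>l\<in>supp x. f l * x l)"

definition normG :: "(nat \<Rightarrow> real) \<Rightarrow> real" where
  "normG x = Sup ((\<lambda>f. \<bar>ip f x\<bar>) ` G0)"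

definition normW :: "nat set \<Rightarrow> ((nat \<Rightarrow> real) list \<Rightarrow> nat) \<Rightarrow> (nat \<Rightarrow> real) \<Rightarrow> real" where
  "normW \<Omega>1 \<sigma> x = Sup ((\<lambda>f. \<bar>ip f x\<bar>) ` W0 \<Omega>1 \<sigma>)"

end

theory Submission
  imports Defs
begin

lemma two_m_le: "(2::nat) \<le> m \<Longrightarrow> 2 * m \<le> m^5"
proof -
  assume "2 \<le> m"
  have "m^5 = m * m^4" by (simp add: power_Suc[symmetric] numeral_eq_Suc del: power_Suc)
  moreover have "2 \<le> m^4" using \<open>2 \<le> m\<close> power_increasing[of 1 4 m] by simp
  ultimately show ?thesis by (metis mult.commute mult_le_mono2)
qed

lemma mm_ge: "2^k \<le> mm k"
proof (induction k rule: mm.induct)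
  case (3 j)
  have "2 \<le> mm (Suc j)" using 3 by (metis order_trans le_add1 one_le_numeral power_increasing power_one_right Suc_eq_plus1_left)
  then show ?case using 3 two_m_le[of "mm (Suc j)"] by simp
qed simp_all

lemma mm_pos: "1 \<le> mm k"
  using mm_ge[of k] one_le_power[of "2::nat" k] by linarith

lemma mm_suc: "mm k \<le> mm (Suc k)"
proof (cases k)
  case 0 then show ?thesis by simp
next
  case (Suc i)
  have "mm k \<le> mm k ^ 5" using mm_pos[of k] by (simp add: self_le_power)
  then show ?thesis using Suc by simp
qed

lemma mm_mono: "a \<le> b \<Longrightarrow> mm a \<le> mm b"
proof (induction b)
  case (Suc b) then show ?case using mm_suc[of b] by (auto simp: le_Suc_eq)
qed simp

lemma s_exp_ge: "1 \<le> s_exp (Suc (Suc k))"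
proof -
  have "2 \<le> mm (Suc (Suc k))" using mm_ge[of "Suc (Suc k)"] mm_ge[of 1] mm_mono[of 1 "Suc (Suc k)"] by simp
  then have "2 \<le> mm (Suc (Suc k)) ^ 4" using power_increasing[of 1 4 "mm (Suc (Suc k))"] by simp
  then have "real (mm (Suc (Suc k)) ^ 4) \<ge> 2" by linarith
  moreover have "1 \<le> log 2 y" if "2 \<le> y" for y::real
    using that by (subst le_log_iff) auto
  ultimately have "log 2 (real (mm (Suc (Suc k)) ^ 4)) \<ge> 1" by blast
  then show ?thesis unfolding s_exp_def by linarith
qed

lemma nn_pos: "1 \<le> nn k"
proof (induction k rule: nn.induct)
  case (3 j)
  then show ?case using s_exp_ge[of j] by simp
qed simp_all

lemma nn_suc: "nn k \<le> nn (Suc k)"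
proof (cases k)
  case 0 then show ?thesis by simp
next
  case (Suc i)
  have "nn k \<le> 2 * nn k" by simp
  also have "\<dots> \<le> (2 * nn k) ^ s_exp (Suc k)"
    apply (rule self_le_power) using s_exp_ge[of i] nn_pos[of k] Suc by auto
  finally show ?thesis using Suc by simp
qed

lemma nn_mono: "a \<le> b \<Longrightarrow> nn a \<le> nn b"
proof (induction b)
  case (Suc b) then show ?case using nn_suc[of b] by (auto simp: le_Suc_eq)
qed simp

lemma blk_disj: "blk g h \<Longrightarrow> g l \<noteq> 0 \<Longrightarrow> h l = 0"
  unfolding blk_def supp_def by auto

lemma blk_sum_bound:
  "sorted_wrt blk gs \<Longrightarrow> 0 \<le> B \<Longrightarrow> (\<forall>g\<in>set gs. \<bar>g l\<bar> \<le> B) \<Longrightarrow> \<bar>\<Sum>g\<leftarrow>gs. g l\<bar> \<le> B"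
proof (induction gs)
  case Nil then show ?case by simp
next
  case (Cons g gs)
  show ?case
  proof (cases "g l = 0")
    case True then show ?thesis using Cons by simp
  next
    case False
    then have "\<forall>h\<in>set gs. h l = 0" using Cons.prems(1) blk_disj by auto
    then have "(\<Sum>h\<leftarrow>gs. h l) = 0" by (induction gs) auto
    then show ?thesis using Cons by simp
  qed
qed

lemma geom_half: "(\<Sum>j\<in>{1..N}. (1/2::real)^j) = 1 - (1/2)^N"
  by (induction N) (auto simp: atLeastAtMostSuc_conv)

lemma geom_subset: "finite S \<Longrightarrow> \<forall>j\<in>S. 1 \<le> j \<Longrightarrow> (\<Sum>j\<in>S. (1/2::real)^j) \<le> 1"
proof -
  assume fS: "finite S" and S1: "\<forall>j\<in>S. 1 \<le> j"
  define N where "N = Max (insert 0 S)"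
  have "S \<subseteq> {1..N}" using fS S1 unfolding N_def by auto
  then have "(\<Sum>j\<in>S. (1/2::real)^j) \<le> (\<Sum>j\<in>{1..N}. (1/2::real)^j)"
    by (intro sum_mono2) auto
  also have "\<dots> \<le> 1" unfolding geom_half by simp
  finally show ?thesis .
qed

lemma sq_le_sum: "a \<in> set as \<Longrightarrow> a^2 \<le> (\<Sum>b\<leftarrow>as. b^2::real)"
proof (induction as)
  case (Cons b as)
  have "0 \<le> (\<Sum>b\<leftarrow>as. b^2::real)" by (induction as) auto
  then show ?case using Cons by (auto intro: add_increasing[OF zero_le_power2] add_increasing2)
qed simp

lemma wavg_bound:
  assumes "block_list gs" "\<forall>g\<in>set gs. \<bar>g l\<bar> \<le> 1"
  shows "\<bar>wavg j gs l\<bar> \<le> 1 / real (mm (2*j))"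
proof -
  have "\<bar>\<Sum>g\<leftarrow>gs. g l\<bar> \<le> 1" using assms blk_sum_bound[of gs 1 l] unfolding block_list_def by auto
  moreover have "real (mm (2*j)) \<ge> 1" using mm_pos by simp
  ultimately show ?thesis unfolding wavg_def by (simp add: abs_div divide_right_mono)
qed

lemma G0_bound: "g \<in> G0 \<Longrightarrow> \<bar>g l\<bar> \<le> 1"
proof (induction g rule: G0.induct)
  case (avg j gs)
  then have "\<bar>wavg j gs l\<bar> \<le> 1 / real (mm (2*j))" using wavg_bound by auto
  also have "\<dots> \<le> 1" using mm_pos[of "2*j"] by simp
  finally show ?case .
next
  case (comb as fs js)
  have dj: "distinct js" using comb(6) distinct_map by blast
  have b1: "\<bar>as!i * (fs!i) l\<bar> \<le> (1/2)^(js!i)" if i: "i < length fs" for i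
  proof -
    obtain gs where gs: "block_list gs" "\<forall>g\<in>set gs. g \<in> G0 \<and> \<bar>g l\<bar> \<le> 1" "fs!i = wavg (js!i) gs"
      using comb(7) i by blast
    have "\<bar>(fs!i) l\<bar> \<le> 1 / real (mm (2*(js!i)))" using gs wavg_bound by auto
    also have "\<dots> \<le> (1/2)^(js!i)"
    proof -
      have "(2::real)^(js!i) \<le> 2^(2*(js!i))" by (rule power_increasing) auto
      also have "\<dots> \<le> real (mm (2*(js!i)))" using mm_ge[of "2*(js!i)"] 
        by (metis of_nat_le_iff of_nat_numeral of_nat_power)
      finally show ?thesis by (simp add: power_one_over frac_le)
    qed
    finally have f: "\<bar>(fs!i) l\<bar> \<le> (1/2)^(js!i)" .
    have "(as!i)^2 \<le> 1" using sq_le_sum[of "as!i" as] comb(1,4) i by simp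
    then have "\<bar>as!i\<bar> \<le> 1" by (simp add: abs_square_le_1)
    then show ?thesis using f by (simp add: abs_mult mult_le_one order_trans[OF mult_right_mono[of "\<bar>as!i\<bar>" 1]])
  qed
  have "\<bar>\<Sum>i<length fs. as ! i * (fs ! i) l\<bar> \<le> (\<Sum>i<length fs. \<bar>as ! i * (fs ! i) l\<bar>)"
    by (rule sum_abs)
  also have "\<dots> \<le> (\<Sum>i<length fs. (1/2::real)^(js!i))" using b1 by (intro sum_mono) auto
  also have "\<dots> = (\<Sum>i<length js. (1/2::real)^(js!i))" using comb(5) by simp
  also have "\<dots> = (\<Sum>j\<in>set js. (1/2::real)^j)"
    using dj by (simp add: sum_list_distinct_conv_sum_set[symmetric] sum_list_sum_nth atLeast0LessThan)
  also have "\<dots> \<le> 1" using comb(5,7) by (intro geom_subset) (auto simp: in_set_conv_nth)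
  finally show ?case .
qed simp_all

definition restr :: "nat \<Rightarrow> nat \<Rightarrow> (nat \<Rightarrow> real) \<Rightarrow> (nat \<Rightarrow> real)" where
  "restr a b g = (\<lambda>l. if l \<in> {a..b} then g l else 0)"

lemma sum_list_restr: "(\<Sum>g\<leftarrow>gs. restr a b g l) = (if l \<in> {a..b} then (\<Sum>g\<leftarrow>gs. g l) else 0)"
  by (induction gs) (auto simp: restr_def)

lemma sum_list_filter_nz: "(\<Sum>g\<leftarrow>filter (\<lambda>g. g \<noteq> (\<lambda>_. 0)) gs. g l) = (\<Sum>g\<leftarrow>gs. g l)"
  by (induction gs) auto

lemma restr_wavg: "restr a b (wavg j gs) = wavg j (filter (\<lambda>g. g \<noteq> (\<lambda>_. 0)) (map (restr a b) gs))"
  apply (rule ext)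
  apply (simp only: wavg_def sum_list_filter_nz map_map o_def sum_list_restr)
  apply (simp add: restr_def)
  done

lemma supp_restr: "supp (restr a b g) \<subseteq> supp g"
  unfolding supp_def restr_def by auto

lemma block_restr: "block_list gs \<Longrightarrow> block_list (filter (\<lambda>g. g \<noteq> (\<lambda>_. 0)) (map (restr a b) gs))"
proof -
  assume bl: "block_list gs"
  have "sorted_wrt (\<lambda>x y. x \<noteq> (\<lambda>_. 0) \<longrightarrow> y \<noteq> (\<lambda>_. 0) \<longrightarrow> blk x y) (map (restr a b) gs)"
    apply (rule sorted_wrt_map_mono[of blk])
    using bl apply (simp add: block_list_def)
    using supp_restr unfolding blk_def by (meson subsetD)
  then have "sorted_wrt (\<lambda>x y. x \<noteq> (\<lambda>_. 0) \<longrightarrow> y \<noteq> (\<lambda>_. 0) \<longrightarrow> blk x y) (filter (\<lambda>g. g \<noteq> (\<lambda>_. 0)) (map (restr a b) gs))"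
    by (rule sorted_wrt_filter)
  then have "sorted_wrt blk (filter (\<lambda>g. g \<noteq> (\<lambda>_. 0)) (map (restr a b) gs))"
    by (rule sorted_wrt_mono_rel[rotated]) auto
  then show ?thesis unfolding block_list_def by auto
qed

lemma wavg_nil: "wavg j [] = (\<lambda>_. 0)"
  unfolding wavg_def by simp

lemma wavg_restr_case:
  assumes "length gs \<le> nn (2*j)" "block_list gs"
    "\<forall>g\<in>set gs. g \<in> G0 \<and> (restr a b g = (\<lambda>_. 0) \<or> restr a b g \<in> G0)"
    "restr a b (wavg j gs) \<noteq> (\<lambda>_. 0)"
  shows "\<exists>gs'. 1 \<le> length gs' \<and> length gs' \<le> nn (2*j) \<and> block_list gs' \<and> (\<forall>g\<in>set gs'. g \<in> G0)
          \<and> restr a b (wavg j gs) = wavg j gs'"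
proof (intro exI conjI)
  let ?gs = "filter (\<lambda>g. g \<noteq> (\<lambda>_. 0)) (map (restr a b) gs)"
  show e: "restr a b (wavg j gs) = wavg j ?gs" by (rule restr_wavg)
  show "1 \<le> length ?gs" using e assms(4) wavg_nil by (cases ?gs) auto
  have "length ?gs \<le> length gs" using length_filter_le[of _ "map (restr a b) gs"] by simp
  then show "length ?gs \<le> nn (2*j)" using assms(1) by linarith
  show "block_list ?gs" using block_restr assms(2) by blast
  show "\<forall>g\<in>set ?gs. g \<in> G0" using assms(3) by auto
qed

lemma restr_sum_eq: "restr a b (\<lambda>l. \<Sum>i<n. c i * f i l) = (\<lambda>l. \<Sum>i<n. c i * restr a b (f i) l)"
  by (auto simp: restr_def fun_eq_iff)

lemma sum_idx:
  fixes h :: "nat \<Rightarrow> real"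
  assumes "\<forall>k<n. \<not> P k \<longrightarrow> h k = 0"
  shows "(\<Sum>i<length (filter P [0..<n]). h (filter P [0..<n] ! i)) = (\<Sum>k<n. h k)"
proof -
  let ?idx = "filter P [0..<n]"
  have "(\<Sum>i<length ?idx. h (?idx ! i)) = sum_list (map h ?idx)"
    by (simp add: sum_list_sum_nth atLeast0LessThan)
  also have "\<dots> = sum h (set ?idx)" by (simp add: sum_list_distinct_conv_sum_set)
  also have "\<dots> = (\<Sum>k<n. h k)"
    by (rule sum.mono_neutral_left) (use assms in auto)
  finally show ?thesis .
qed

lemma G0_restr: "g \<in> G0 \<Longrightarrow> restr a b g = (\<lambda>_. 0) \<or> restr a b g \<in> G0"
proof (induction g rule: G0.induct)
  case (unit n)
  show ?case
  proof (cases "n \<in> {a..b}")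
    case True
    then have "restr a b (\<lambda>l. if l = n then 1 else 0) = (\<lambda>l. if l = n then 1 else 0)"
      by (auto simp: restr_def fun_eq_iff)
    then show ?thesis using G0.unit by metis
  next
    case False
    then have "restr a b (\<lambda>l. if l = n then 1 else 0) = (\<lambda>_. 0)"
      by (auto simp: restr_def fun_eq_iff)
    then show ?thesis by simp
  qed
next
  case (neg f)
  have e: "restr a b (\<lambda>l. - f l) = (\<lambda>l. - restr a b f l)" by (auto simp: restr_def fun_eq_iff)
  show ?case
  proof (cases "restr a b f = (\<lambda>_. 0)")
    case True then show ?thesis unfolding e by (simp add: fun_eq_iff)
  next
    case False then have "restr a b f \<in> G0" using neg by simp
    then show ?thesis unfolding e using G0.neg by blast
  qed
next
  case (avg j gs)
  show ?case
  proof (cases "restr a b (wavg j gs) = (\<lambda>_. 0)")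
    case False
    then obtain gs' where "1 \<le> length gs'" "length gs' \<le> nn (2*j)" "block_list gs'" "\<forall>g\<in>set gs'. g \<in> G0"
      "restr a b (wavg j gs) = wavg j gs'" using wavg_restr_case[of gs j a b] avg by blast
    then show ?thesis using G0.avg[of j gs'] avg(1) by simp
  qed simp
next
  case (comb as fs js)
  let ?n = "length fs"
  define F where "F i = restr a b (fs!i)" for i
  define idx where "idx = filter (\<lambda>i. F i \<noteq> (\<lambda>_. 0)) [0..<?n]"
  have e: "restr a b (\<lambda>l. \<Sum>i<?n. as ! i * (fs ! i) l) = (\<lambda>l. \<Sum>i<?n. as ! i * F i l)"
    unfolding F_def by (rule restr_sum_eq)
  show ?case
  proof (cases "idx = []")
    case True
    then have "\<forall>i<?n. F i = (\<lambda>_. 0)" unfolding idx_def by (simp add: filter_empty_conv)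
    then show ?thesis unfolding e by simp
  next
    case False
    let ?as = "map ((!) as) idx" and ?fs = "map F idx" and ?js = "map ((!) js) idx"
    have idxn: "\<forall>k\<in>set idx. k < ?n \<and> F k \<noteq> (\<lambda>_. 0)" unfolding idx_def by auto
    have didx: "distinct idx" unfolding idx_def by simp
    have "(\<lambda>l. \<Sum>i<length ?fs. ?as ! i * (?fs ! i) l) \<in> G0"
    proof (rule G0.comb)
      show "length ?as = length ?fs" by simp
      show "1 \<le> length ?fs" using False by (cases idx) auto
      show "\<forall>a\<in>set ?as. a \<in> \<rat>" using comb(1,3) idxn by auto
      show "length ?js = length ?fs" by simp
      have "sum_list (map power2 ?as) = sum (\<lambda>k. (as!k)^2) (set idx)"
        using didx by (simp add: sum_list_distinct_conv_sum_set o_def)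
      also have "\<dots> \<le> sum (\<lambda>k. (as!k)^2) {..<?n}"
        by (rule sum_mono2) (use idxn in auto)
      also have "\<dots> = sum_list (map power2 as)"
        using comb(1) by (simp add: sum_list_sum_nth atLeast0LessThan)
      finally show "sum_list (map power2 ?as) \<le> 1" using comb(4) by linarith
      have dm: "distinct (map (\<lambda>j. mm (2 * j)) js)" by fact
      show "distinct (map (\<lambda>j. mm (2 * j)) ?js)"
        unfolding map_map distinct_map
      proof
        show "distinct idx" by fact
        show "inj_on ((\<lambda>j. mm (2 * j)) \<circ> (!) js) (set idx)"
        proof (rule inj_onI)
          fix x y assume "x \<in> set idx" "y \<in> set idx" "((\<lambda>j. mm (2 * j)) \<circ> (!) js) x = ((\<lambda>j. mm (2 * j)) \<circ> (!) js) y"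
          then show "x = y" using dm idxn comb(5) unfolding distinct_conv_nth by (metis length_map nth_map o_apply)
        qed
      qed
      show "\<forall>i<length ?fs. 1 \<le> ?js ! i \<and> (\<exists>gs. 1 \<le> length gs \<and> length gs \<le> nn (2 * ?js ! i)
             \<and> block_list gs \<and> (\<forall>g\<in>set gs. g \<in> G0) \<and> ?fs ! i = wavg (?js ! i) gs)"
      proof (intro allI impI)
        fix i assume i: "i < length ?fs"
        let ?k = "idx ! i"
        have k: "?k < ?n" "F ?k \<noteq> (\<lambda>_. 0)" using idxn i by auto
        obtain gs where gs: "1 \<le> js ! ?k" "length gs \<le> nn (2 * js ! ?k)" "block_list gs"
          "\<forall>g\<in>set gs. g \<in> G0 \<and> (restr a b g = (\<lambda>_. 0) \<or> restr a b g \<in> G0)" "fs ! ?k = wavg (js ! ?k) gs"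
          using comb(7) k(1) by blast
        have "restr a b (wavg (js ! ?k) gs) \<noteq> (\<lambda>_. 0)" using k(2) gs(5) unfolding F_def by simp
        then obtain gs' where "1 \<le> length gs'" "length gs' \<le> nn (2 * js ! ?k)" "block_list gs'"
          "\<forall>g\<in>set gs'. g \<in> G0" "restr a b (wavg (js ! ?k) gs) = wavg (js ! ?k) gs'"
          using wavg_restr_case[of gs "js ! ?k" a b] gs by blast
        then show "1 \<le> ?js ! i \<and> (\<exists>gs. 1 \<le> length gs \<and> length gs \<le> nn (2 * ?js ! i)
             \<and> block_list gs \<and> (\<forall>g\<in>set gs. g \<in> G0) \<and> ?fs ! i = wavg (?js ! i) gs)"
          using i gs(1,5) unfolding F_def by auto
      qed
    qed
    moreover have "(\<lambda>l. \<Sum>i<length ?fs. ?as ! i * (?fs ! i) l) = (\<lambda>l. \<Sum>i<?n. as ! i * F i l)"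
    proof
      fix l
      have "(\<Sum>i<length ?fs. ?as ! i * (?fs ! i) l) = (\<Sum>i<length idx. as ! (idx!i) * F (idx!i) l)"
        by simp
      also have "\<dots> = (\<Sum>k<?n. as ! k * F k l)" unfolding idx_def
        by (rule sum_idx[where h = "\<lambda>k. as ! k * F k l"]) auto
      finally show "(\<Sum>i<length ?fs. ?as ! i * (?fs ! i) l) = (\<Sum>i<?n. as ! i * F i l)" .
    qed
    ultimately show ?thesis unfolding e by simp
  qed
qed

lemma ip_superset: "finite S \<Longrightarrow> supp x \<subseteq> S \<Longrightarrow> ip f x = (\<Sum>l\<in>S. f l * x l)"
  unfolding ip_def by (rule sum.mono_neutral_left) (auto simp: supp_def)

lemma special_props:
  assumes "special \<Omega>1 \<sigma> J fs"
  shows "block_list fs" "\<forall>f\<in>set fs. f \<in> G0" "length fs = nn (2*J+1)"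
  using assms unfolding special_def Qs_def by auto

lemma special_sum_bound:
  assumes "special \<Omega>1 \<sigma> J fs"
  shows "\<bar>\<Sum>f\<leftarrow>fs. f l\<bar> \<le> 1"
  using blk_sum_bound[of fs 1 l] special_props[OF assms] G0_bound unfolding block_list_def by auto

definition spf :: "real \<Rightarrow> nat \<Rightarrow> nat \<Rightarrow> nat \<Rightarrow> (nat \<Rightarrow> real) list \<Rightarrow> (nat \<Rightarrow> real)" where
  "spf \<epsilon> a b J fs = (\<lambda>l. \<epsilon> * (if l \<in> {a..b} then (\<Sum>f\<leftarrow>fs. f l) / real (mm (2*J+1)) else 0))"

lemma W0_cases:
  assumes "f \<in> W0 \<Omega>1 \<sigma>"
  shows "f \<in> G0 \<or> (\<exists>\<epsilon> a b J fs. f = spf \<epsilon> a b J fs \<and> \<bar>\<epsilon>\<bar> = 1 \<and> 1 \<le> J \<and> special \<Omega>1 \<sigma> J fs)"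
  using assms unfolding W0_def spf_def by blast

lemma spf_W0: "\<bar>\<epsilon>\<bar> = 1 \<Longrightarrow> 1 \<le> J \<Longrightarrow> special \<Omega>1 \<sigma> J fs \<Longrightarrow> spf \<epsilon> a b J fs \<in> W0 \<Omega>1 \<sigma>"
  unfolding W0_def spf_def by blast

lemma spf_bound:
  assumes "special \<Omega>1 \<sigma> J fs" "\<bar>\<epsilon>\<bar> = 1"
  shows "\<bar>spf \<epsilon> a b J fs l\<bar> \<le> 1 / real (mm (2*J+1))"
proof -
  have m: "real (mm (2*J+1)) \<ge> 1" using mm_pos by simp
  have "\<bar>(\<Sum>f\<leftarrow>fs. f l) / real (mm (2*J+1))\<bar> \<le> 1 / real (mm (2*J+1))"
    using special_sum_bound[OF assms(1), of l] m by (simp add: abs_div divide_right_mono)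
  then show ?thesis unfolding spf_def using assms(2) m by (simp add: abs_mult)
qed

lemma W0_bound: "f \<in> W0 \<Omega>1 \<sigma> \<Longrightarrow> \<bar>f l\<bar> \<le> 1"
proof -
  assume "f \<in> W0 \<Omega>1 \<sigma>"
  then consider "f \<in> G0" | \<epsilon> a b J fs where "f = spf \<epsilon> a b J fs" "\<bar>\<epsilon>\<bar> = 1" "1 \<le> J" "special \<Omega>1 \<sigma> J fs"
    using W0_cases by blast
  then show ?thesis
  proof cases
    case 1 then show ?thesis by (rule G0_bound)
  next
    case 2
    then have "\<bar>f l\<bar> \<le> 1 / real (mm (2*J+1))" using spf_bound by blast
    also have "\<dots> \<le> 1" using mm_pos[of "2*J+1"] by simp
    finally show ?thesis .
  qed
qed

lemma G0_W0: "G0 \<subseteq> W0 \<Omega>1 \<sigma>" unfolding W0_def by auto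

lemma ip_abs_bound:
  assumes "finite (supp x)" "\<forall>l. \<bar>f l\<bar> \<le> B"
  shows "\<bar>ip f x\<bar> \<le> B * (\<Sum>l\<in>supp x. \<bar>x l\<bar>)"
proof -
  have "\<bar>ip f x\<bar> \<le> (\<Sum>l\<in>supp x. \<bar>f l * x l\<bar>)" unfolding ip_def by (rule sum_abs)
  also have "\<dots> \<le> (\<Sum>l\<in>supp x. B * \<bar>x l\<bar>)"
    by (rule sum_mono) (use assms(2) in \<open>auto simp: abs_mult intro: mult_right_mono\<close>)
  finally show ?thesis by (simp add: sum_distrib_left)
qed

lemma bdd_W0: "finite (supp x) \<Longrightarrow> bdd_above ((\<lambda>f. \<bar>ip f x\<bar>) ` W0 \<Omega>1 \<sigma>)"
proof -
  assume x: "finite (supp x)"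
  show ?thesis
  proof (rule bdd_aboveI2[where M="\<Sum>l\<in>supp x. \<bar>x l\<bar>"])
    fix f assume f: "f \<in> W0 \<Omega>1 \<sigma>"
    show "\<bar>ip f x\<bar> \<le> (\<Sum>l\<in>supp x. \<bar>x l\<bar>)" using ip_abs_bound[OF x, of f 1] W0_bound[OF f] by simp
  qed
qed

lemma bdd_G0: "finite (supp x) \<Longrightarrow> bdd_above ((\<lambda>f. \<bar>ip f x\<bar>) ` G0)"
proof -
  assume x: "finite (supp x)"
  show ?thesis
  proof (rule bdd_aboveI2[where M="\<Sum>l\<in>supp x. \<bar>x l\<bar>"])
    fix f assume f: "f \<in> G0"
    show "\<bar>ip f x\<bar> \<le> (\<Sum>l\<in>supp x. \<bar>x l\<bar>)" using ip_abs_bound[OF x, of f 1] G0_bound[OF f] by simp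
  qed
qed

lemma normW_ge: "finite (supp x) \<Longrightarrow> f \<in> W0 \<Omega>1 \<sigma> \<Longrightarrow> \<bar>ip f x\<bar> \<le> normW \<Omega>1 \<sigma> x"
  unfolding normW_def by (rule cSUP_upper) (auto intro: bdd_W0)

lemma normG_ge: "finite (supp x) \<Longrightarrow> f \<in> G0 \<Longrightarrow> \<bar>ip f x\<bar> \<le> normG x"
  unfolding normG_def by (rule cSUP_upper) (auto intro: bdd_G0)

lemma normW_le: "(\<And>f. f \<in> W0 \<Omega>1 \<sigma> \<Longrightarrow> \<bar>ip f x\<bar> \<le> B) \<Longrightarrow> normW \<Omega>1 \<sigma> x \<le> B"
  unfolding normW_def by (rule cSUP_least) (use G0_W0 G0.unit in blast)+

lemma normW_nonneg: "finite (supp x) \<Longrightarrow> 0 \<le> normW \<Omega>1 \<sigma> x"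
proof -
  assume x: "finite (supp x)"
  have "(\<lambda>l. if l = 0 then 1 else 0) \<in> W0 \<Omega>1 \<sigma>" using G0_W0 G0.unit by blast
  from normW_ge[OF x this] show ?thesis by linarith
qed

lemma ip_unit: "finite (supp x) \<Longrightarrow> ip (\<lambda>l. if l = n then 1 else 0) x = x n"
proof -
  assume x: "finite (supp x)"
  have "ip (\<lambda>l. if l = n then 1 else 0) x = (\<Sum>l\<in>supp x. if l = n then x l else 0)"
    unfolding ip_def by (rule sum.cong) auto
  also have "\<dots> = (if n \<in> supp x then x n else 0)" using x by (simp add: sum.delta)
  also have "\<dots> = x n" by (auto simp: supp_def)
  finally show ?thesis .
qed

lemma coord_le_normW: "finite (supp x) \<Longrightarrow> \<bar>x n\<bar> \<le> normW \<Omega>1 \<sigma> x"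
proof -
  assume x: "finite (supp x)"
  have "(\<lambda>l. if l = n then 1 else 0) \<in> W0 \<Omega>1 \<sigma>" using G0_W0 G0.unit by blast
  from normW_ge[OF x this] show ?thesis using ip_unit[OF x] by simp
qed

lemma restr_spf: "restr c d (spf \<epsilon> a b J fs) = spf \<epsilon> (max a c) (min b d) J fs"
  unfolding restr_def spf_def by (auto simp: fun_eq_iff)

lemma W0_restr: "f \<in> W0 \<Omega>1 \<sigma> \<Longrightarrow> restr c d f = (\<lambda>_. 0) \<or> restr c d f \<in> W0 \<Omega>1 \<sigma>"
proof -
  assume "f \<in> W0 \<Omega>1 \<sigma>"
  then consider "f \<in> G0" | \<epsilon> a b J fs where "f = spf \<epsilon> a b J fs" "\<bar>\<epsilon>\<bar> = 1" "1 \<le> J" "special \<Omega>1 \<sigma> J fs"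
    using W0_cases by blast
  then show ?thesis
  proof cases
    case 1 then show ?thesis using G0_restr[of f c d] G0_W0 by blast
  next
    case 2 then show ?thesis using restr_spf spf_W0 by metis
  qed
qed

lemma blk_chain:
  assumes ch: "\<forall>k. blk (x k) (x (Suc k))"
  shows "i < k \<Longrightarrow> p \<in> supp (x i) \<Longrightarrow> q \<in> supp (x k) \<Longrightarrow> p < q"
proof (induction k arbitrary: q)
  case 0 then show ?case by simp
next
  case (Suc k)
  show ?case
  proof (cases "i = k")
    case True then show ?thesis using ch Suc.prems unfolding blk_def by blast
  next
    case False
    then have ik: "i < k" using Suc.prems by simp
    have "x k \<noteq> (\<lambda>_. 0)" using ch unfolding blk_def by blast
    then obtain r where r: "r \<in> supp (x k)" unfolding supp_def by auto
    have "p < r" using Suc.IH[OF ik Suc.prems(2) r] .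
    moreover have "r < q" using ch Suc.prems(3) r unfolding blk_def by blast
    ultimately show ?thesis by simp
  qed
qed

lemma ip_lin:
  fixes x :: "nat \<Rightarrow> nat \<Rightarrow> real" and n :: nat
  assumes "\<forall>i. finite (supp (x i))"
  shows "ip f (\<lambda>l. \<Sum>i\<le>n. a i * x i l) = (\<Sum>i\<le>n. a i * ip f (x i))"
proof -
  let ?S = "\<Union>i\<le>n. supp (x i)"
  have fS: "finite ?S" using assms by (intro finite_UN_I) auto
  have sub: "supp (\<lambda>l. \<Sum>i\<le>n. a i * x i l) \<subseteq> ?S" unfolding supp_def
    by (auto intro: ccontr)
  have "ip f (\<lambda>l. \<Sum>i\<le>n. a i * x i l) = (\<Sum>l\<in>?S. f l * (\<Sum>i\<le>n. a i * x i l))"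
    by (rule ip_superset[OF fS sub])
  also have "\<dots> = (\<Sum>i\<le>n. a i * (\<Sum>l\<in>?S. f l * x i l))"
    by (simp add: sum_distrib_left sum.swap[of _ ?S] mult.left_commute)
  also have "\<dots> = (\<Sum>i\<le>n. a i * ip f (x i))"
  proof (rule sum.cong[OF refl])
    fix i assume "i \<in> {..n}"
    then have "supp (x i) \<subseteq> ?S" by auto
    then show "a i * (\<Sum>l\<in>?S. f l * x i l) = a i * ip f (x i)" using ip_superset[OF fS] by metis
  qed
  finally show ?thesis .
qed

lemma sum_sum_list: "(\<Sum>l\<in>S. \<Sum>f\<leftarrow>fs. h f l) = (\<Sum>f\<leftarrow>fs. \<Sum>l\<in>S. h f l)"
  by (induction fs) (auto simp: sum.distrib)

lemma spf_ip: "ip (spf \<epsilon> a b J fs) x = \<epsilon> / real (mm (2*J+1)) * (\<Sum>f\<leftarrow>fs. ip (restr a b f) x)"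
proof -
  have e: "spf \<epsilon> a b J fs = (\<lambda>l. \<epsilon> / real (mm (2*J+1)) * (\<Sum>f\<leftarrow>fs. restr a b f l))"
    unfolding spf_def sum_list_restr by auto
  let ?c = "\<epsilon> / real (mm (2*J+1))"
  have "ip (spf \<epsilon> a b J fs) x = (\<Sum>l\<in>supp x. ?c * (\<Sum>f\<leftarrow>fs. restr a b f l * x l))"
    unfolding e ip_def by (rule sum.cong[OF refl]) (simp add: sum_list_mult_const)
  also have "\<dots> = ?c * (\<Sum>l\<in>supp x. \<Sum>f\<leftarrow>fs. restr a b f l * x l)" by (simp add: sum_distrib_left)
  also have "\<dots> = ?c * (\<Sum>f\<leftarrow>fs. ip (restr a b f) x)" unfolding sum_sum_list ip_def ..
  finally show ?thesis .
qed

lemma sum_list_abs_le: "(\<forall>f\<in>set fs. \<bar>h f\<bar> \<le> (B::real)) \<Longrightarrow> \<bar>\<Sum>f\<leftarrow>fs. h f\<bar> \<le> real (length fs) * B"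
proof (induction fs)
  case (Cons g fs)
  have "\<bar>\<Sum>f\<leftarrow>g#fs. h f\<bar> \<le> \<bar>h g\<bar> + \<bar>\<Sum>f\<leftarrow>fs. h f\<bar>" by (simp add: abs_triangle_ineq)
  then show ?case using Cons by (simp add: algebra_simps)
qed simp

lemma normG_nonneg: "finite (supp x) \<Longrightarrow> 0 \<le> normG x"
  using normG_ge[of x "\<lambda>l. if l = 0 then 1 else 0"] G0.unit by fastforce

lemma sum_bound_t:
  fixes v e :: "nat \<Rightarrow> real"
  shows "t \<le> n \<Longrightarrow> (\<forall>i<t. v i \<le> e i) \<Longrightarrow> v t \<le> 1 \<Longrightarrow> (\<forall>k. t \<le> k \<longrightarrow> Suc k \<le> n \<longrightarrow> v (Suc k) \<le> e k)
    \<Longrightarrow> (\<Sum>i\<le>n. v i) \<le> 1 + (\<Sum>k<n. e k)"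
proof (induction n)
  case 0 then show ?case by simp
next
  case (Suc n)
  show ?case
  proof (cases "t = Suc n")
    case True
    have "(\<Sum>i<Suc n. v i) \<le> (\<Sum>i<Suc n. e i)" using Suc.prems True by (intro sum_mono) auto
    then show ?thesis using True Suc.prems(3) by (simp add: lessThan_Suc_atMost[symmetric])
  next
    case False
    then have "t \<le> n" using Suc.prems by simp
    then have "(\<Sum>i\<le>n. v i) \<le> 1 + (\<Sum>k<n. e k)" using Suc by auto
    moreover have "v (Suc n) \<le> e n" using Suc.prems(4) \<open>t \<le> n\<close> by auto
    ultimately show ?thesis by simp
  qed
qed

lemma spec_S1:
  assumes sp: "special \<Omega>1 \<sigma> J fs" and ep: "\<bar>\<epsilon>\<bar> = 1" and fx: "finite (supp xx)"
    and nx: "normW \<Omega>1 \<sigma> xx = 1" and mj: "mm jj \<le> mm (2*J+1)"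
    and ce: "real (card (supp xx)) / real (mm jj) < e"
  shows "\<bar>ip (spf \<epsilon> a b J fs) xx\<bar> \<le> e"
proof -
  let ?m = "real (mm (2*J+1))"
  have "\<bar>ip (spf \<epsilon> a b J fs) xx\<bar> \<le> (1/?m) * (\<Sum>l\<in>supp xx. \<bar>xx l\<bar>)"
    using ip_abs_bound[OF fx] spf_bound[OF sp ep] by blast
  also have "\<dots> \<le> (1/?m) * (\<Sum>l\<in>supp xx. 1)"
    using coord_le_normW[OF fx, of _ \<Omega>1 \<sigma>] nx by (intro mult_left_mono sum_mono) auto
  also have "\<dots> = real (card (supp xx)) / ?m" by simp
  also have "\<dots> \<le> real (card (supp xx)) / real (mm jj)"
    using mm_pos[of jj] mj by (intro divide_left_mono) auto
  finally show ?thesis using ce by linarith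
qed

lemma spec_S2:
  assumes sp: "special \<Omega>1 \<sigma> J fs" and ep: "\<bar>\<epsilon>\<bar> = 1" and fx: "finite (supp xx)"
    and nj: "nn (2*J+1) \<le> nn jj" and ng: "normG xx \<le> e / real (nn jj)"
  shows "\<bar>ip (spf \<epsilon> a b J fs) xx\<bar> \<le> e"
proof -
  let ?m = "real (mm (2*J+1))"
  have m1: "?m \<ge> 1" using mm_pos by simp
  have n1: "real (nn jj) \<ge> 1" using nn_pos by simp
  have "\<forall>f\<in>set fs. \<bar>ip (restr a b f) xx\<bar> \<le> normG xx"
  proof
    fix f assume "f \<in> set fs"
    then have "f \<in> G0" using special_props[OF sp] by blast
    then consider "restr a b f = (\<lambda>_. 0)" | "restr a b f \<in> G0" using G0_restr by blast
    then show "\<bar>ip (restr a b f) xx\<bar> \<le> normG xx"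
    proof cases
      case 1 then show ?thesis using normG_nonneg[OF fx] by (simp add: ip_def)
    next
      case 2 then show ?thesis using normG_ge[OF fx] by blast
    qed
  qed
  then have "\<bar>\<Sum>f\<leftarrow>fs. ip (restr a b f) xx\<bar> \<le> real (nn (2*J+1)) * normG xx"
    using sum_list_abs_le special_props(3)[OF sp] by metis
  also have "\<dots> \<le> real (nn jj) * (e / real (nn jj))"
    using nj normG_nonneg[OF fx] ng by (intro mult_mono) auto
  also have "\<dots> = e" using n1 by simp
  finally have s: "\<bar>\<Sum>f\<leftarrow>fs. ip (restr a b f) xx\<bar> \<le> e" .
  have "\<bar>ip (spf \<epsilon> a b J fs) xx\<bar> = \<bar>\<Sum>f\<leftarrow>fs. ip (restr a b f) xx\<bar> / ?m"
    unfolding spf_ip using ep m1 by (simp add: abs_mult abs_div)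
  also have "\<dots> \<le> \<bar>\<Sum>f\<leftarrow>fs. ip (restr a b f) xx\<bar>" 
  proof -
    have "\<bar>\<Sum>f\<leftarrow>fs. ip (restr a b f) xx\<bar> * 1 \<le> \<bar>\<Sum>f\<leftarrow>fs. ip (restr a b f) xx\<bar> * ?m"
      using m1 by (intro mult_left_mono) auto
    then show ?thesis using m1 by (simp add: divide_le_eq)
  qed
  finally show ?thesis using s by linarith
qed

theorem mainTheorem10:
  fixes \<Omega>1 \<Omega>2 :: "nat set" and \<sigma> :: "(nat \<Rightarrow> real) list \<Rightarrow> nat"
    and \<epsilon> :: real and eps :: "nat \<Rightarrow> real" and j :: "nat \<Rightarrow> nat"
    and x :: "nat \<Rightarrow> nat \<Rightarrow> real"
  assumes "\<Omega>1 \<inter> \<Omega>2 = {}" and "infinite \<Omega>1" and "infinite \<Omega>2"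
    and "0 \<notin> \<Omega>1" and "0 \<notin> \<Omega>2"
    and "sigma_ok \<Omega>2 \<sigma>"
    and "\<epsilon> > 0" and "\<forall>k. eps k > 0" and "summable eps" and "suminf eps < \<epsilon>"
    and "strict_mono j" and "\<forall>k. even (j k) \<and> 0 < j k"
    and "\<forall>k. finite (supp (x k)) \<and> x k \<noteq> (\<lambda>_. 0)"
    and "\<forall>k. blk (x k) (x (Suc k))"
    and "\<forall>k. normW \<Omega>1 \<sigma> (x k) = 1"
    and "\<forall>k. real (card (supp (x k))) / real (mm (j k)) < eps k"
    and "\<forall>k. normG (x (Suc k)) \<le> eps k / real (nn (j k))"
  shows "\<forall>(n::nat) (a::nat \<Rightarrow> real).
           (MAX i\<in>{..n}. \<bar>a i\<bar>) \<le> normW \<Omega>1 \<sigma> (\<lambda>l. \<Sum>i\<le>n. a i * x i l)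
         \<and> normW \<Omega>1 \<sigma> (\<lambda>l. \<Sum>i\<le>n. a i * x i l) \<le> (1 + \<epsilon>) * (MAX i\<in>{..n}. \<bar>a i\<bar>)"
proof (intro allI)
  fix n :: nat and a :: "nat \<Rightarrow> real"
  define y where "y = (\<lambda>l. \<Sum>i\<le>n. a i * x i l)"
  define M where "M = (MAX i\<in>{..n}. \<bar>a i\<bar>)"
  have fin: "\<forall>k. finite (supp (x k))" using assms(13) by blast
  have nz: "\<forall>k. x k \<noteq> (\<lambda>_. 0)" using assms(13) by blast
  have finy: "finite (supp y)"
  proof (rule finite_subset)
    show "supp y \<subseteq> (\<Union>i\<le>n. supp (x i))" unfolding y_def supp_def by (auto intro: ccontr)
    show "finite (\<Union>i\<le>n. supp (x i))" using fin by (intro finite_UN_I) auto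
  qed
  have lin: "\<And>f. ip f y = (\<Sum>i\<le>n. a i * ip f (x i))" unfolding y_def by (rule ip_lin[OF fin])
  have aM: "\<forall>i\<le>n. \<bar>a i\<bar> \<le> M" unfolding M_def by auto
  obtain i0 where i0: "i0 \<le> n" "\<bar>a i0\<bar> = M"
  proof -
    have "M \<in> (\<lambda>i. \<bar>a i\<bar>) ` {..n}" unfolding M_def by (rule Max_in) auto
    then show ?thesis using that by auto
  qed
  have M0: "0 \<le> M" using i0 by auto
  have epsnn: "\<forall>k. 0 \<le> eps k" using assms(8) by (simp add: less_imp_le)
  have partial: "(\<Sum>k<n. eps k) \<le> suminf eps"
    using sum_le_suminf[OF assms(9), of "{..<n}"] epsnn by auto

  have key: "(\<Sum>i\<le>n. \<bar>ip f (x i)\<bar>) \<le> 1 + (\<Sum>k<n. eps k)" if f: "f \<in> W0 \<Omega>1 \<sigma>" for f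
  proof -
    have le1: "\<bar>ip f (x i)\<bar> \<le> 1" for i using normW_ge[OF _ f, of "x i"] fin assms(15) by auto
    from W0_cases[OF f] consider "f \<in> G0" | \<epsilon>' b c J fs where "f = spf \<epsilon>' b c J fs" "\<bar>\<epsilon>'\<bar> = 1" "1 \<le> J" "special \<Omega>1 \<sigma> J fs"
      by blast
    then show ?thesis
    proof cases
      case 1
      show ?thesis
      proof (rule sum_bound_t[of 0])
        show "\<forall>k. 0 \<le> k \<longrightarrow> Suc k \<le> n \<longrightarrow> \<bar>ip f (x (Suc k))\<bar> \<le> eps k"
        proof (intro allI impI)
          fix k
          have "\<bar>ip f (x (Suc k))\<bar> \<le> normG (x (Suc k))" using normG_ge[OF _ 1] fin by blast
          also have "\<dots> \<le> eps k / real (nn (j k))" using assms(17) by blast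
          also have "\<dots> \<le> eps k" using nn_pos[of "j k"] epsnn[rule_format, of k] by (simp add: divide_le_eq mult_le_cancel_left1)
          finally show "\<bar>ip f (x (Suc k))\<bar> \<le> eps k" .
        qed
      qed (use le1 in auto)
    next
      case 2
      let ?P = "\<lambda>i. j i < 2*J+1"
      define t where "t = (LEAST i. \<not> ?P i \<or> i = n)"
      have tn: "t \<le> n" unfolding t_def by (rule Least_le) simp
      have below: "?P i" if "i < t" for i
        using not_less_Least[OF that[unfolded t_def]] that tn by auto
      have above: "2*J+1 < j k" if "t \<le> k" "Suc k \<le> n" for k
      proof -
        have "\<not> ?P t \<or> t = n" unfolding t_def by (rule LeastI[of _ n]) simp
        then have nP: "\<not> ?P t" using that by auto
        have "even (j t)" using assms(12) by blast
        then have "j t \<noteq> 2*J+1" by auto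
        then have "2*J+1 < j t" using nP by simp
        also have "j t \<le> j k" using that(1) assms(11) by (simp add: strict_mono_leD)
        finally show ?thesis .
      qed
      show ?thesis
      proof (rule sum_bound_t[OF tn])
        show "\<forall>i<t. \<bar>ip f (x i)\<bar> \<le> eps i"
        proof (intro allI impI)
          fix i assume "i < t"
          then have "j i < 2*J+1" using below by blast
          then have "mm (j i) \<le> mm (2*J+1)" by (intro mm_mono) simp
          then show "\<bar>ip f (x i)\<bar> \<le> eps i" unfolding 2(1)
            using spec_S1[OF 2(4) 2(2)] fin assms(15,16) by blast
        qed
        show "\<forall>k. t \<le> k \<longrightarrow> Suc k \<le> n \<longrightarrow> \<bar>ip f (x (Suc k))\<bar> \<le> eps k"
        proof (intro allI impI)
          fix k assume "t \<le> k" "Suc k \<le> n"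
          then have "2*J+1 < j k" using above by blast
          then have "nn (2*J+1) \<le> nn (j k)" by (intro nn_mono) simp
          then show "\<bar>ip f (x (Suc k))\<bar> \<le> eps k" unfolding 2(1)
            using spec_S2[OF 2(4) 2(2)] fin assms(17) by blast
        qed
      qed (use le1 in auto)
    qed
  qed
  have upper: "normW \<Omega>1 \<sigma> y \<le> (1 + \<epsilon>) * M"
  proof (rule normW_le)
    fix f assume f: "f \<in> W0 \<Omega>1 \<sigma>"
    have "\<bar>ip f y\<bar> \<le> (\<Sum>i\<le>n. \<bar>a i * ip f (x i)\<bar>)" unfolding lin by (rule sum_abs)
    also have "\<dots> \<le> (\<Sum>i\<le>n. M * \<bar>ip f (x i)\<bar>)"
      using aM by (intro sum_mono) (auto simp: abs_mult intro: mult_right_mono)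
    also have "\<dots> = M * (\<Sum>i\<le>n. \<bar>ip f (x i)\<bar>)" by (simp add: sum_distrib_left)
    also have "\<dots> \<le> M * (1 + \<epsilon>)"
      using key[OF f] partial assms(10) M0 by (intro mult_left_mono) auto
    finally show "\<bar>ip f y\<bar> \<le> (1 + \<epsilon>) * M" by (simp add: mult.commute)
  qed

  have "supp (x i0) \<noteq> {}" using nz unfolding supp_def by auto
  define c where "c = Min (supp (x i0))"
  define d where "d = Max (supp (x i0))"
  have cd: "supp (x i0) \<subseteq> {c..d}" unfolding c_def d_def using fin by auto
  have cin: "c \<in> supp (x i0)" "d \<in> supp (x i0)" unfolding c_def d_def using fin \<open>supp (x i0) \<noteq> {}\<close> by auto
  have low: "M * \<bar>ip f (x i0)\<bar> \<le> normW \<Omega>1 \<sigma> y" if f: "f \<in> W0 \<Omega>1 \<sigma>" for f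
  proof -
    let ?g = "restr c d f"
    have g0: "ip ?g (x i0) = ip f (x i0)"
      unfolding ip_def restr_def using cd by (intro sum.cong) auto
    have gi: "ip ?g (x i) = 0" if "i \<noteq> i0" for i
    proof -
      have "l \<notin> {c..d}" if "l \<in> supp (x i)" for l
      proof (cases "i < i0")
        case True then show ?thesis using blk_chain[OF assms(14) True that cin(1)] by auto
      next
        case False then have "i0 < i" using \<open>i \<noteq> i0\<close> by simp
        then show ?thesis using blk_chain[OF assms(14) _ cin(2) that] by auto
      qed
      then show ?thesis unfolding ip_def restr_def by (intro sum.neutral) auto
    qed
    have "ip ?g y = (\<Sum>i\<le>n. a i * ip ?g (x i))" by (rule lin)
    also have "\<dots> = a i0 * ip ?g (x i0)"
      using i0(1) gi by (subst sum.remove[of _ i0]) auto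
    finally have eq: "ip ?g y = a i0 * ip f (x i0)" using g0 by simp
    from W0_restr[OF f, of c d] show ?thesis
    proof
      assume "?g = (\<lambda>_. 0)"
      then have "ip f (x i0) = 0" using g0 by (simp add: ip_def)
      then show ?thesis using normW_nonneg[OF finy] by simp
    next
      assume "?g \<in> W0 \<Omega>1 \<sigma>"
      then have "\<bar>ip ?g y\<bar> \<le> normW \<Omega>1 \<sigma> y" by (rule normW_ge[OF finy])
      then show ?thesis using eq i0(2) by (simp add: abs_mult)
    qed
  qed
  have lower: "M \<le> normW \<Omega>1 \<sigma> y"
  proof (cases "M = 0")
    case True then show ?thesis using normW_nonneg[OF finy] by simp
  next
    case False
    then have Mp: "M > 0" using M0 by simp
    have "normW \<Omega>1 \<sigma> (x i0) \<le> normW \<Omega>1 \<sigma> y / M"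
    proof (rule normW_le)
      fix f assume "f \<in> W0 \<Omega>1 \<sigma>"
      then show "\<bar>ip f (x i0)\<bar> \<le> normW \<Omega>1 \<sigma> y / M" using low Mp by (simp add: le_divide_eq mult.commute)
    qed
    then have "1 \<le> normW \<Omega>1 \<sigma> y / M" using assms(15) by simp
    then show ?thesis using Mp by (simp add: le_divide_eq)
  qed
  show "(MAX i\<in>{..n}. \<bar>a i\<bar>) \<le> normW \<Omega>1 \<sigma> (\<lambda>l. \<Sum>i\<le>n. a i * x i l)
         \<and> normW \<Omega>1 \<sigma> (\<lambda>l. \<Sum>i\<le>n. a i * x i l) \<le> (1 + \<epsilon>) * (MAX i\<in>{..n}. \<bar>a i\<bar>)"
    using lower upper unfolding M_def y_def by simp
qed

end
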